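(* Let $G$ be a graph with edge set $E$, $k\ge1$, suppose $M_k(G)$ is a connected matroid, let $B$ be a base of $M_k(G)$ and $e\in B$, and let $A$ be the component of $G\langle B\rangle$ containing $e$. Suppose $A$ has at least two cycles and $e\in E(\lfloor A\rfloor)$. Then the fundamental cocircuit $K(e,B)$ equals $(E\setminus B)\cup\{e\}$.
   Context: Graphs are finite, may have loops and parallel edges, and have no isolated vertices. A leaf is a vertex incident to exactly one edge, which is not a loop. For $X\subseteq E$, $G\langle X\rangle$ is the subgraph with edge set $X$ and vertex set the vertices incident to $X$. For $k\ge0$, $M_k(G)$ is the matroid on $E$ whose circuits are the inclusion-minimal members of $\{C\subseteq E:C\neq\emptyset,\ |C|=|V(G\langle C\rangle)|+k\}$. A matroid is connected if its ground set has at least two elements and every two elements lie in a common circuit. For a base $B$ and $e\in B$, $K(e,B)$ is the unique cocircuit $K$ with $K\cap B=\{e\}$. For a connected graph $A$ containing a cycle, its kernel $\lfloor A\rfloor$ is the subgraph obtained by repeatedly deleting leaves (with their incident edges) until no leaf remains. *)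

theory Defs
  imports Main
begin

text \<open>A graph is given by a finite edge set E and an incidence map inc: each edge
  is incident to one vertex (a loop) or two vertices. Vertices are exactly the
  vertices incident to edges (no isolated vertices).\<close>

definition graph :: "'e set \<Rightarrow> ('e \<Rightarrow> 'v set) \<Rightarrow> bool" where
  "graph E inc \<longleftrightarrow> finite E \<and> (\<forall>f\<in>E. card (inc f) = 1 \<or> card (inc f) = 2)"

definition verts :: "('e \<Rightarrow> 'v set) \<Rightarrow> 'e set \<Rightarrow> 'v set" where
  "verts inc X = (\<Union>f\<in>X. inc f)"

definition Mk_circuit :: "'e set \<Rightarrow> ('e \<Rightarrow> 'v set) \<Rightarrow> nat \<Rightarrow> 'e set \<Rightarrow> bool" where
  "Mk_circuit E inc k C \<longleftrightarrow>
     (let P = (\<lambda>D. D \<subseteq> E \<and> D \<noteq> {} \<and> card D = card (verts inc D) + k)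
      in P C \<and> (\<forall>D. D \<subset> C \<longrightarrow> \<not> P D))"

definition Mk_indep :: "'e set \<Rightarrow> ('e \<Rightarrow> 'v set) \<Rightarrow> nat \<Rightarrow> 'e set \<Rightarrow> bool" where
  "Mk_indep E inc k X \<longleftrightarrow> X \<subseteq> E \<and> (\<forall>C. Mk_circuit E inc k C \<longrightarrow> \<not> C \<subseteq> X)"

definition Mk_base :: "'e set \<Rightarrow> ('e \<Rightarrow> 'v set) \<Rightarrow> nat \<Rightarrow> 'e set \<Rightarrow> bool" where
  "Mk_base E inc k B \<longleftrightarrow> Mk_indep E inc k B \<and> (\<forall>X. B \<subset> X \<longrightarrow> \<not> Mk_indep E inc k X)"

definition Mk_cocircuit :: "'e set \<Rightarrow> ('e \<Rightarrow> 'v set) \<Rightarrow> nat \<Rightarrow> 'e set \<Rightarrow> bool" where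
  "Mk_cocircuit E inc k K \<longleftrightarrow>
     (let P = (\<lambda>D. D \<subseteq> E \<and> (\<forall>B. Mk_base E inc k B \<longrightarrow> D \<inter> B \<noteq> {}))
      in P K \<and> (\<forall>D. D \<subset> K \<longrightarrow> \<not> P D))"

definition Mk_connected :: "'e set \<Rightarrow> ('e \<Rightarrow> 'v set) \<Rightarrow> nat \<Rightarrow> bool" where
  "Mk_connected E inc k \<longleftrightarrow> 2 \<le> card E \<and>
     (\<forall>f\<in>E. \<forall>g\<in>E. \<exists>C. Mk_circuit E inc k C \<and> f \<in> C \<and> g \<in> C)"

definition fund_cocircuit :: "'e set \<Rightarrow> ('e \<Rightarrow> 'v set) \<Rightarrow> nat \<Rightarrow> 'e \<Rightarrow> 'e set \<Rightarrow> 'e set" where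
  "fund_cocircuit E inc k e B = (THE K. Mk_cocircuit E inc k K \<and> K \<inter> B = {e})"

definition edge_adj :: "('e \<Rightarrow> 'v set) \<Rightarrow> 'e set \<Rightarrow> ('e \<times> 'e) set" where
  "edge_adj inc X = {(f, g). f \<in> X \<and> g \<in> X \<and> inc f \<inter> inc g \<noteq> {}}"

definition component_of :: "('e \<Rightarrow> 'v set) \<Rightarrow> 'e set \<Rightarrow> 'e \<Rightarrow> 'e set" where
  "component_of inc X e = {f. (e, f) \<in> (edge_adj inc X)\<^sup>*}"

definition connected_edges :: "('e \<Rightarrow> 'v set) \<Rightarrow> 'e set \<Rightarrow> bool" where
  "connected_edges inc X \<longleftrightarrow> (\<forall>f\<in>X. \<forall>g\<in>X. (f, g) \<in> (edge_adj inc X)\<^sup>*)"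

definition degree :: "('e \<Rightarrow> 'v set) \<Rightarrow> 'e set \<Rightarrow> 'v \<Rightarrow> nat" where
  "degree inc X v = 2 * card {f\<in>X. inc f = {v}} + card {f\<in>X. v \<in> inc f \<and> card (inc f) = 2}"

definition is_cycle :: "('e \<Rightarrow> 'v set) \<Rightarrow> 'e set \<Rightarrow> bool" where
  "is_cycle inc C \<longleftrightarrow> C \<noteq> {} \<and> connected_edges inc C \<and> (\<forall>v\<in>verts inc C. degree inc C v = 2)"

definition is_leaf :: "('e \<Rightarrow> 'v set) \<Rightarrow> 'e set \<Rightarrow> 'v \<Rightarrow> bool" where
  "is_leaf inc X v \<longleftrightarrow> (\<exists>!f. f \<in> X \<and> v \<in> inc f) \<and> (\<forall>f\<in>X. v \<in> inc f \<longrightarrow> card (inc f) = 2)"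

definition leaf_del :: "('e \<Rightarrow> 'v set) \<Rightarrow> ('e set \<times> 'e set) set" where
  "leaf_del inc = {(X, X - {f}) | X f v. f \<in> X \<and> v \<in> inc f \<and> is_leaf inc X v}"

definition kernel_edges :: "('e \<Rightarrow> 'v set) \<Rightarrow> 'e set \<Rightarrow> 'e set" where
  "kernel_edges inc A = (THE X. (A, X) \<in> (leaf_del inc)\<^sup>* \<and> (\<forall>v. \<not> is_leaf inc X v))"

end

theory Submission
  imports Defs
begin


definition exc :: "('e \<Rightarrow> 'v set) \<Rightarrow> 'e set \<Rightarrow> int" where
  "exc inc X = int (card X) - int (card (verts inc X))"

definition conn :: "('e \<Rightarrow> 'v set) \<Rightarrow> 'e set \<Rightarrow> bool" where
  "conn inc X \<longleftrightarrow> (\<forall>S. S \<subseteq> X \<longrightarrow> S \<noteq> {} \<longrightarrow>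
      (\<forall>g\<in>S. \<forall>h\<in>X. inc g \<inter> inc h \<noteq> {} \<longrightarrow> h \<in> S) \<longrightarrow> S = X)"

definition leafless :: "('e \<Rightarrow> 'v set) \<Rightarrow> 'e set \<Rightarrow> bool" where
  "leafless inc X \<longleftrightarrow> (\<forall>v. \<not> is_leaf inc X v)"

lemma g_inc:
  assumes "graph E inc" "f \<in> E"
  shows "finite (inc f)" "inc f \<noteq> {}" "card (inc f) \<le> 2"
proof -
  have c: "card (inc f) = 1 \<or> card (inc f) = 2" using assms unfolding graph_def by blast
  then show "finite (inc f)" using card.infinite by fastforce
  show "inc f \<noteq> {}" using c by auto
  show "card (inc f) \<le> 2" using c by auto
qed

lemma verts_simps[simp]:
  "verts inc {} = {}" "verts inc (insert f X) = inc f \<union> verts inc X"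
  "verts inc (X \<union> Y) = verts inc X \<union> verts inc Y"
  by (auto simp: verts_def)

lemma verts_mono: "X \<subseteq> Y \<Longrightarrow> verts inc X \<subseteq> verts inc Y"
  by (auto simp: verts_def)

lemma verts_Int: "verts inc (X \<inter> Y) \<subseteq> verts inc X \<inter> verts inc Y"
  by (auto simp: verts_def)

lemma finite_verts:
  assumes "graph E inc" "X \<subseteq> E" "finite X"
  shows "finite (verts inc X)"
  using assms g_inc(1)[OF assms(1)] unfolding verts_def by blast

lemma exc_empty[simp]: "exc inc {} = 0"
  by (simp add: exc_def)

lemma exc_insert:
  assumes "graph E inc" "finite Z" "Z \<subseteq> E" "g \<in> E" "g \<notin> Z"
  shows "exc inc (insert g Z) = exc inc Z + 1 - int (card (inc g - verts inc Z))"
proof -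
  have fz: "finite (verts inc Z)" using finite_verts[OF assms(1,3,2)] .
  have fg: "finite (inc g)" using g_inc(1)[OF assms(1,4)] .
  have eq: "verts inc (insert g Z) = verts inc Z \<union> (inc g - verts inc Z)" by auto
  have "card (verts inc Z \<union> (inc g - verts inc Z)) = card (verts inc Z) + card (inc g - verts inc Z)"
    using fz fg by (intro card_Un_disjoint) auto
  then have "card (verts inc (insert g Z)) = card (verts inc Z) + card (inc g - verts inc Z)"
    by (simp only: eq)
  then show ?thesis using assms(2,5) by (simp add: exc_def)
qed

lemma exc_insert_ge:
  assumes "graph E inc" "finite Z" "Z \<subseteq> E" "g \<in> E" "g \<notin> Z" "inc g \<inter> verts inc Z \<noteq> {}"
  shows "exc inc (insert g Z) \<ge> exc inc Z"
proof -
  have fg: "finite (inc g)" "card (inc g) \<le> 2" using g_inc(1,3)[OF assms(1,4)] by auto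
  have "card (inc g - verts inc Z) < card (inc g)"
    using assms(6) fg by (intro psubset_card_mono) auto
  then show ?thesis using exc_insert[OF assms(1-5)] fg by linarith
qed

lemma exc_single:
  assumes "graph E inc" "g \<in> E"
  shows "exc inc {g} \<le> 0"
  using g_inc[OF assms] by (simp add: exc_def verts_def Suc_le_eq card_gt_0_iff)

lemma exc_remove:
  assumes "graph E inc" "finite X" "X \<subseteq> E" "z \<in> X"
  shows "exc inc (X - {z}) \<ge> exc inc X - 1"
proof -
  have e: "insert z (X - {z}) = X" using assms by blast
  have "exc inc (insert z (X - {z})) = exc inc (X - {z}) + 1 - int (card (inc z - verts inc (X - {z})))"
    using exc_insert[OF assms(1), of "X - {z}" z] assms by blast
  then show ?thesis using e by simp
qed

lemma exc_super:
  assumes "graph E inc" "finite X" "finite Y" "X \<subseteq> E" "Y \<subseteq> E"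
  shows "exc inc (X \<union> Y) + exc inc (X \<inter> Y) \<ge> exc inc X + exc inc Y"
proof -
  have fx: "finite (verts inc X)" using finite_verts[OF assms(1,4,2)] .
  have fy: "finite (verts inc Y)" using finite_verts[OF assms(1,5,3)] .
  have c1: "card (X \<union> Y) + card (X \<inter> Y) = card X + card Y"
    using card_Un_Int[OF assms(2,3)] by linarith
  have c2: "card (verts inc X \<union> verts inc Y) + card (verts inc X \<inter> verts inc Y)
      = card (verts inc X) + card (verts inc Y)"
    using card_Un_Int[OF fx fy] by linarith
  have fi: "finite (verts inc X \<inter> verts inc Y)" using fx by (rule finite_Int[OF disjI1])
  have c3: "card (verts inc (X \<inter> Y)) \<le> card (verts inc X \<inter> verts inc Y)"
    by (rule card_mono[OF fi verts_Int])
  have vu: "verts inc (X \<union> Y) = verts inc X \<union> verts inc Y" by (rule verts_simps(3))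
  show ?thesis unfolding exc_def vu using c1 c2 c3 by linarith
qed

lemma exc_disj:
  assumes "graph E inc" "finite X" "finite Y" "X \<subseteq> E" "Y \<subseteq> E"
    "verts inc X \<inter> verts inc Y = {}"
  shows "exc inc (X \<union> Y) = exc inc X + exc inc Y"
proof -
  have "X \<inter> Y = {}"
  proof (rule ccontr)
    assume "X \<inter> Y \<noteq> {}" then obtain f where "f \<in> X" "f \<in> Y" by blast
    moreover have "inc f \<noteq> {}" using assms(4) g_inc(2)[OF assms(1)] \<open>f \<in> X\<close> by blast
    ultimately show False using assms(6) by (auto simp: verts_def)
  qed
  moreover have fx: "finite (verts inc X)" using finite_verts[OF assms(1,4,2)] .
  moreover have fy: "finite (verts inc Y)" using finite_verts[OF assms(1,5,3)] .
  ultimately show ?thesis unfolding exc_def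
    using assms by (simp add: card_Un_disjoint)
qed



lemma conn_step:
  assumes "conn inc X" "S \<subseteq> X" "S \<noteq> {}" "S \<noteq> X"
  shows "\<exists>g\<in>S. \<exists>h\<in>X - S. inc g \<inter> inc h \<noteq> {}"
  using assms unfolding conn_def by blast

lemma rtrancl_closed:
  assumes "(a, b) \<in> (edge_adj inc X)\<^sup>*" "a \<in> S"
    "\<forall>g\<in>S. \<forall>h\<in>X. inc g \<inter> inc h \<noteq> {} \<longrightarrow> h \<in> S"
  shows "b \<in> S"
  using assms(1,2)
proof (induction rule: rtrancl_induct)
  case base then show ?case .
next
  case (step y z) then show ?case using assms(3) by (auto simp: edge_adj_def)
qed

lemma connected_conn: "connected_edges inc X \<Longrightarrow> conn inc X"
  unfolding conn_def connected_edges_def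
proof (intro allI impI)
  fix S assume c: "\<forall>f\<in>X. \<forall>g\<in>X. (f, g) \<in> (edge_adj inc X)\<^sup>*" and s: "S \<subseteq> X" "S \<noteq> {}"
    and cl: "\<forall>g\<in>S. \<forall>h\<in>X. inc g \<inter> inc h \<noteq> {} \<longrightarrow> h \<in> S"
  obtain a where a: "a \<in> S" using s by blast
  show "S = X"
  proof
    show "X \<subseteq> S" using rtrancl_closed[OF _ a cl] c a s by blast
  qed (rule s)
qed

lemma comp_sub: "component_of inc B e \<subseteq> B \<union> {e}"
proof
  fix f assume "f \<in> component_of inc B e"
  then have "(e, f) \<in> (edge_adj inc B)\<^sup>*" by (simp add: component_of_def)
  then show "f \<in> B \<union> {e}"
    by (induction rule: rtrancl_induct) (auto simp: edge_adj_def)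
qed

lemma comp_self: "e \<in> component_of inc B e"
  by (simp add: component_of_def)

lemma comp_closed:
  assumes "f \<in> component_of inc B e" "g \<in> B" "f \<in> B" "inc f \<inter> inc g \<noteq> {}"
  shows "g \<in> component_of inc B e"
proof -
  have "(f, g) \<in> edge_adj inc B" using assms by (auto simp: edge_adj_def)
  then show ?thesis using assms(1) by (auto simp: component_of_def)
qed

lemma edge_adj_sym: "(a, b) \<in> (edge_adj inc X)\<^sup>* \<Longrightarrow> (b, a) \<in> (edge_adj inc X)\<^sup>*"
proof -
  assume ab: "(a, b) \<in> (edge_adj inc X)\<^sup>*"
  have c: "(edge_adj inc X)\<inverse> = edge_adj inc X"
  proof (rule set_eqI)
    fix x :: "'a \<times> 'a" obtain p q where x: "x = (p, q)" by (cases x)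
    show "x \<in> (edge_adj inc X)\<inverse> \<longleftrightarrow> x \<in> edge_adj inc X"
      unfolding x edge_adj_def by blast
  qed
  have "(b, a) \<in> ((edge_adj inc X)\<inverse>)\<^sup>*" by (rule rtrancl_converseI[OF ab])
  then show ?thesis unfolding c .
qed

lemma comp_conn:
  assumes "e \<in> B"
  shows "conn inc (component_of inc B e)"
  unfolding conn_def
proof (intro allI impI)
  let ?A = "component_of inc B e"
  have AB: "?A \<subseteq> B" using comp_sub[of inc B e] assms by auto
  fix S assume s: "S \<subseteq> ?A" "S \<noteq> {}"
    and cl: "\<forall>g\<in>S. \<forall>h\<in>?A. inc g \<inter> inc h \<noteq> {} \<longrightarrow> h \<in> S"
  obtain a where a: "a \<in> S" using s by blast
  have cl2: "\<forall>g\<in>S. \<forall>h\<in>B. inc g \<inter> inc h \<noteq> {} \<longrightarrow> h \<in> S"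
  proof (intro ballI impI)
    fix g h assume g: "g \<in> S" and h: "h \<in> B" and gh: "inc g \<inter> inc h \<noteq> {}"
    have gA: "g \<in> ?A" using g s(1) by (rule subsetD[rotated])
    have "h \<in> ?A" using comp_closed[OF gA h subsetD[OF AB gA] gh] .
    then show "h \<in> S" using cl g gh by (simp add: Int_commute)
  qed
  have "(e, a) \<in> (edge_adj inc B)\<^sup>*" using a s by (auto simp: component_of_def)
  then have ea: "(a, e) \<in> (edge_adj inc B)\<^sup>*" by (rule edge_adj_sym)
  have "?A \<subseteq> S"
  proof
    fix f assume "f \<in> ?A"
    then have "(e, f) \<in> (edge_adj inc B)\<^sup>*" by (simp add: component_of_def)
    then have "(a, f) \<in> (edge_adj inc B)\<^sup>*" by (rule rtrancl_trans[OF ea])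
    then show "f \<in> S" by (rule rtrancl_closed[OF _ a cl2])
  qed
  then show "S = ?A" using s by blast
qed

lemma growth:
  assumes "graph E inc" "A \<subseteq> E" "finite A" "conn inc A" "Z \<subseteq> A" "Z \<noteq> {}"
  shows "exc inc Z \<le> exc inc A"
proof -
  have "\<And>Z. card (A - Z) = n \<Longrightarrow> Z \<subseteq> A \<Longrightarrow> Z \<noteq> {} \<Longrightarrow> exc inc Z \<le> exc inc A" for n
  proof (induction n rule: less_induct)
    case (less n Z)
    show ?case
    proof (cases "Z = A")
      case True then show ?thesis by simp
    next
      case False
      obtain g h where g: "g \<in> Z" "h \<in> A - Z" "inc g \<inter> inc h \<noteq> {}"
        using conn_step[OF assms(4) less(3,4) False] by blast
      have fz: "finite Z" using less(3) assms(3) finite_subset by blast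
      have hv: "inc h \<inter> verts inc Z \<noteq> {}" using g by (auto simp: verts_def)
      have "exc inc Z \<le> exc inc (insert h Z)"
        using exc_insert_ge[OF assms(1) fz _ _ _ hv] less(3) assms(2) g by blast
      moreover have "exc inc (insert h Z) \<le> exc inc A"
      proof (rule less(1)[OF _ refl])
        show "card (A - insert h Z) < n"
          using less(2) g assms(3) by (metis Diff_insert card_Diff1_less finite_Diff)
      qed (use less g in auto)
      ultimately show ?thesis by linarith
    qed
  qed
  then show ?thesis using assms(5,6) by blast
qed

lemma leaf_lemma:
  assumes "graph E inc" "K \<subseteq> E" "finite K" "conn inc K" "Z \<subset> K" "Z \<noteq> {}"
    "exc inc K \<le> exc inc Z"
  shows "\<exists>v. is_leaf inc K v"
proof -
  have "\<And>Z. card (K - Z) = n \<Longrightarrow> Z \<subset> K \<Longrightarrow> Z \<noteq> {} \<Longrightarrow> exc inc K \<le> exc inc Z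
     \<Longrightarrow> \<exists>v. is_leaf inc K v" for n
  proof (induction n rule: less_induct)
    case (less n Z)
    obtain g h where g: "g \<in> Z" "h \<in> K - Z" "inc g \<inter> inc h \<noteq> {}"
      using conn_step[OF assms(4) _ less(4)] less(3) by blast
    have fz: "finite Z" using less(3) assms(3) finite_subset by blast
    have hE: "h \<in> E" "Z \<subseteq> E" using g less(3) assms(2) by auto
    have hv: "inc h \<inter> verts inc Z \<noteq> {}" using g by (auto simp: verts_def)
    have ei: "exc inc (insert h Z) = exc inc Z + 1 - int (card (inc h - verts inc Z))"
      using exc_insert[OF assms(1) fz hE(2) hE(1)] g by blast
    have fh: "finite (inc h)" "card (inc h) \<le> 2" using g_inc[OF assms(1) hE(1)] by auto
    have lt: "card (inc h - verts inc Z) < card (inc h)"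
      using hv fh by (intro psubset_card_mono) auto
    show ?case
    proof (cases "insert h Z = K")
      case True
      then have "exc inc (insert h Z) \<le> exc inc Z" using less(5) by simp
      then have "card (inc h - verts inc Z) \<ge> 1" using ei by linarith
      then obtain w where w: "w \<in> inc h" "w \<notin> verts inc Z"
        by (metis Diff_iff card_0_eq fh(1) finite_Diff not_one_le_zero subsetI subset_empty)
      obtain u where u: "u \<in> inc h" "u \<in> verts inc Z" using hv by blast
      have "card {u, w} \<le> card (inc h)" using u w fh by (intro card_mono) auto
      moreover have "u \<noteq> w" using u w by blast
      then have "card {u, w} = 2" by simp
      ultimately have c2: "card (inc h) = 2" using fh(2) by linarith
      have "is_leaf inc K w"
        unfolding is_leaf_def
      proof
        show "\<exists>!f. f \<in> K \<and> w \<in> inc f"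
        proof (rule ex1I[of _ h])
          show "h \<in> K \<and> w \<in> inc h" using g w by blast
          fix f assume "f \<in> K \<and> w \<in> inc f"
          then show "f = h" using True w by (auto simp: verts_def)
        qed
        show "\<forall>f\<in>K. w \<in> inc f \<longrightarrow> card (inc f) = 2"
          using True w c2 by (auto simp: verts_def)
      qed
      then show ?thesis by blast
    next
      case False
      show ?thesis
      proof (rule less(1)[OF _ refl])
        show "card (K - insert h Z) < n"
          using less(2) g assms(3) by (metis Diff_insert card_Diff1_less finite_Diff)
        show "insert h Z \<subset> K" using False g less(3) by blast
        show "exc inc K \<le> exc inc (insert h Z)" using ei lt fh less(5) by linarith
      qed simp
    qed
  qed
  then show ?thesis using assms(5,6,7) by blast
qed



lemma leaf_del_E:
  assumes "(X, Y) \<in> leaf_del inc"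
  obtains f v where "f \<in> X" "v \<in> inc f" "is_leaf inc X v" "Y = X - {f}"
  using assms unfolding leaf_del_def by blast

lemma leaf_facts:
  assumes "f \<in> X" "v \<in> inc f" "is_leaf inc X v"
  shows "\<And>g. g \<in> X \<Longrightarrow> v \<in> inc g \<Longrightarrow> g = f"
    and "\<exists>w. inc f = {v, w} \<and> v \<noteq> w"
proof -
  show "\<And>g. g \<in> X \<Longrightarrow> v \<in> inc g \<Longrightarrow> g = f" using assms unfolding is_leaf_def by blast
  have "card (inc f) = 2" using assms unfolding is_leaf_def by blast
  then obtain a b where ab: "inc f = {a, b}" "a \<noteq> b" by (auto simp: card_2_iff)
  then show "\<exists>w. inc f = {v, w} \<and> v \<noteq> w" using assms(2)
    by (metis doubleton_eq_iff insertE singletonD)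
qed

lemma leafless_stays:
  assumes "(X, Y) \<in> leaf_del inc" "leafless inc L" "L \<subseteq> X"
  shows "L \<subseteq> Y"
proof -
  obtain f v where fv: "f \<in> X" "v \<in> inc f" "is_leaf inc X v" "Y = X - {f}"
    using leaf_del_E[OF assms(1)] by blast
  have "f \<notin> L"
  proof
    assume fL: "f \<in> L"
    have "is_leaf inc L v"
      unfolding is_leaf_def
    proof
      show "\<exists>!g. g \<in> L \<and> v \<in> inc g"
        using fL fv(2) leaf_facts(1)[OF fv(1-3)] assms(3) by blast
      show "\<forall>g\<in>L. v \<in> inc g \<longrightarrow> card (inc g) = 2"
        using fv(3) assms(3) unfolding is_leaf_def by blast
    qed
    then show False using assms(2) unfolding leafless_def by blast
  qed
  then show ?thesis using fv(4) assms(3) by blast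
qed

lemma step_conn_exc:
  assumes "graph E inc" "X \<subseteq> E" "finite X" "conn inc X" "(X, Y) \<in> leaf_del inc" "Y \<noteq> {}"
  shows "conn inc Y \<and> exc inc Y = exc inc X"
proof -
  obtain f v where fv: "f \<in> X" "v \<in> inc f" "is_leaf inc X v" "Y = X - {f}"
    using leaf_del_E[OF assms(5)] by blast
  note only = leaf_facts(1)[OF fv(1-3)]
  obtain w where w: "inc f = {v, w}" "v \<noteq> w" using leaf_facts(2)[OF fv(1-3)] by blast
  have adj_w: "\<And>h. h \<in> X \<Longrightarrow> h \<noteq> f \<Longrightarrow> inc h \<inter> inc f \<noteq> {} \<Longrightarrow> w \<in> inc h"
  proof -
    fix h assume h: "h \<in> X" "h \<noteq> f" "inc h \<inter> inc f \<noteq> {}"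
    then obtain x where x: "x \<in> inc h" "x \<in> inc f" by blast
    have "x \<noteq> v" using only[OF h(1)] h(2) x(1) by blast
    then have "x = w" using x(2) w(1) by blast
    then show "w \<in> inc h" using x(1) by simp
  qed
  have conn: "conn inc Y"
    unfolding conn_def
  proof (intro allI impI)
    fix S assume s: "S \<subseteq> Y" "S \<noteq> {}"
      and cl: "\<forall>g\<in>S. \<forall>h\<in>Y. inc g \<inter> inc h \<noteq> {} \<longrightarrow> h \<in> S"
    show "S = Y"
    proof (cases "\<exists>s\<in>S. inc s \<inter> inc f \<noteq> {}")
      case True
      then obtain s where s1: "s \<in> S" "inc s \<inter> inc f \<noteq> {}" by blast
      have ws: "w \<in> inc s" using adj_w[of s] s1 s fv by blast
      have "insert f S = X"
        using assms(4) unfolding conn_def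
      proof (elim allE impE)
        show "insert f S \<subseteq> X" using s fv by blast
        show "insert f S \<noteq> {}" by blast
        show "\<forall>g\<in>insert f S. \<forall>h\<in>X. inc g \<inter> inc h \<noteq> {} \<longrightarrow> h \<in> insert f S"
        proof (intro ballI impI)
          fix g h assume g: "g \<in> insert f S" and h: "h \<in> X" and gh: "inc g \<inter> inc h \<noteq> {}"
          show "h \<in> insert f S"
          proof (cases "h = f")
            case True then show ?thesis by blast
          next
            case hf: False
            show ?thesis
            proof (cases "g = f")
              case True
              then have "w \<in> inc h" using adj_w[OF h hf] gh by blast
              then have "inc s \<inter> inc h \<noteq> {}" using ws by blast
              then show ?thesis using cl s1 h hf fv(4) by blast
            next
              case False
              then show ?thesis using cl g h hf gh fv(4) by blast
            qed
          qed
        qed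
      qed
      then show ?thesis using s fv(4) by blast
    next
      case False
      have "S = X"
        using assms(4) unfolding conn_def
      proof (elim allE impE)
        show "S \<subseteq> X" "S \<noteq> {}" using s fv by auto
        show "\<forall>g\<in>S. \<forall>h\<in>X. inc g \<inter> inc h \<noteq> {} \<longrightarrow> h \<in> S"
        proof (intro ballI impI)
          fix g h assume g: "g \<in> S" and h: "h \<in> X" and gh: "inc g \<inter> inc h \<noteq> {}"
          have "h \<noteq> f" using False g gh by blast
          then show "h \<in> S" using cl g h gh fv(4) by blast
        qed
      qed
      then show ?thesis using s fv by blast
    qed
  qed
  obtain h where h: "h \<in> Y" "w \<in> inc h"
  proof -
    obtain h0 where "h0 \<in> Y" using assms(6) by blast
    then have "{f} \<noteq> X" using fv by blast
    then obtain g h' where "g \<in> {f}" "h' \<in> X - {f}" "inc g \<inter> inc h' \<noteq> {}"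
      using conn_step[OF assms(4), of "{f}"] fv by blast
    then show ?thesis using adj_w that fv(4) by blast
  qed
  have vY: "verts inc Y = verts inc X - {v}"
  proof
    show "verts inc Y \<subseteq> verts inc X - {v}"
      using only fv(4) by (auto simp: verts_def)
    show "verts inc X - {v} \<subseteq> verts inc Y"
    proof
      fix x assume x: "x \<in> verts inc X - {v}"
      then obtain g where g: "g \<in> X" "x \<in> inc g" by (auto simp: verts_def)
      show "x \<in> verts inc Y"
      proof (cases "g = f")
        case True
        then have "x = w" using x g w by auto
        then show ?thesis using h by (auto simp: verts_def)
      next
        case False then show ?thesis using g fv(4) by (auto simp: verts_def)
      qed
    qed
  qed
  have fvX: "finite (verts inc X)" using finite_verts[OF assms(1,2,3)] .
  have vin: "v \<in> verts inc X" using fv by (auto simp: verts_def)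
  have "card (verts inc Y) = card (verts inc X) - 1" using vY fvX vin by simp
  moreover have "card Y = card X - 1" using fv assms(3) by simp
  moreover have "card X \<ge> 1" "card (verts inc X) \<ge> 1"
    using fv assms(3) fvX vin by (auto simp: Suc_le_eq card_gt_0_iff)
  ultimately have "exc inc Y = exc inc X" unfolding exc_def by linarith
  then show ?thesis using conn by blast
qed



lemma reach_inv:
  assumes "(A, X) \<in> (leaf_del inc)\<^sup>*"
    and "graph E inc" "A \<subseteq> E" "finite A" "conn inc A" "L0 \<subseteq> A" "L0 \<noteq> {}" "leafless inc L0"
  shows "X \<subseteq> A \<and> (\<forall>L. L \<subseteq> A \<longrightarrow> leafless inc L \<longrightarrow> L \<subseteq> X) \<and> conn inc X \<and> exc inc X = exc inc A"
  using assms(1)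
proof (induction rule: rtrancl_induct)
  case base then show ?case using assms(5) by simp
next
  case (step Y Z)
  obtain f v where fv: "f \<in> Y" "v \<in> inc f" "is_leaf inc Y v" "Z = Y - {f}"
    using leaf_del_E[OF step(2)] by blast
  have YA: "Y \<subseteq> A" using step(3) by blast
  have ZA: "Z \<subseteq> A" using YA fv(4) by blast
  have LL: "\<forall>L. L \<subseteq> A \<longrightarrow> leafless inc L \<longrightarrow> L \<subseteq> Z"
  proof (intro allI impI)
    fix L assume "L \<subseteq> A" "leafless inc L"
    moreover then have "L \<subseteq> Y" using step(3) by blast
    ultimately show "L \<subseteq> Z" using leafless_stays[OF step(2)] by blast
  qed
  have "L0 \<subseteq> Z" using LL assms(6,8) by blast
  then have "Z \<noteq> {}" using assms(7) by blast
  moreover have "Y \<subseteq> E" using YA assms(3) by blast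
  moreover have "finite Y" using YA assms(4) finite_subset by blast
  moreover have "conn inc Y" using step(3) by blast
  ultimately have "conn inc Z \<and> exc inc Z = exc inc Y"
    using step_conn_exc[OF assms(2) _ _ _ step(2)] by blast
  then show ?case using ZA LL step(3) by simp
qed

lemma kernel_props:
  assumes "graph E inc" "A \<subseteq> E" "finite A" "conn inc A" "L0 \<subseteq> A" "L0 \<noteq> {}" "leafless inc L0"
  shows "kernel_edges inc A \<subseteq> A \<and> leafless inc (kernel_edges inc A) \<and> conn inc (kernel_edges inc A)
    \<and> exc inc (kernel_edges inc A) = exc inc A
    \<and> (\<forall>L. L \<subseteq> A \<longrightarrow> leafless inc L \<longrightarrow> L \<subseteq> kernel_edges inc A)"
proof -
  let ?P = "\<lambda>X. (A, X) \<in> (leaf_del inc)\<^sup>*"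
  have "?P A" by simp
  then obtain X where X: "?P X" "\<forall>Y. ?P Y \<longrightarrow> card X \<le> card Y"
    using ex_has_least_nat[of ?P A card] by blast
  have XA: "X \<subseteq> A" using reach_inv[OF X(1) assms] by blast
  have Xl: "\<forall>v. \<not> is_leaf inc X v"
  proof (intro allI notI)
    fix v assume v: "is_leaf inc X v"
    then obtain f where f: "f \<in> X" "v \<in> inc f" unfolding is_leaf_def by blast
    have "(X, X - {f}) \<in> leaf_del inc" unfolding leaf_del_def using f v by blast
    then have "?P (X - {f})" using X(1) by simp
    then have "card X \<le> card (X - {f})" using X(2) by blast
    moreover have "finite X" using XA assms(3) finite_subset by blast
    ultimately show False using f card_Diff1_less by fastforce
  qed
  have uniq: "\<exists>!X. ?P X \<and> (\<forall>v. \<not> is_leaf inc X v)"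
  proof (rule ex1I[of _ X])
    show "?P X \<and> (\<forall>v. \<not> is_leaf inc X v)" using X Xl by blast
    fix Y assume Y: "?P Y \<and> (\<forall>v. \<not> is_leaf inc Y v)"
    have "Y \<subseteq> A" using reach_inv[OF _ assms] Y by blast
    then have "Y \<subseteq> X" using reach_inv[OF X(1) assms] Y unfolding leafless_def by blast
    moreover have "X \<subseteq> Y" using reach_inv[OF _ assms, of Y] Y XA Xl unfolding leafless_def by blast
    ultimately show "Y = X" by blast
  qed
  have "?P (kernel_edges inc A) \<and> (\<forall>v. \<not> is_leaf inc (kernel_edges inc A) v)"
    unfolding kernel_edges_def by (rule theI'[OF uniq])
  then show ?thesis using reach_inv[OF _ assms] unfolding leafless_def by blast
qed



lemma card_filter_sum: "finite C \<Longrightarrow> card {f\<in>C. P f} = (\<Sum>f\<in>C. of_bool (P f) :: nat)"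
proof -
  assume "finite C"
  moreover have "{f\<in>C. P f} = C \<inter> {f. P f}" by blast
  ultimately show ?thesis by simp
qed

lemma per_edge:
  assumes "graph E inc" "f \<in> E" "inc f \<subseteq> V" "finite V"
  shows "(\<Sum>v\<in>V. 2 * of_bool (inc f = {v}) + of_bool (v \<in> inc f \<and> card (inc f) = 2)) = (2::nat)"
proof -
  have c: "card (inc f) = 1 \<or> card (inc f) = 2" using assms unfolding graph_def by blast
  have s: "(\<Sum>v\<in>V. 2 * of_bool (inc f = {v}) + of_bool (v \<in> inc f \<and> card (inc f) = 2))
     = 2 * card {v\<in>V. inc f = {v}} + card {v\<in>V. v \<in> inc f \<and> card (inc f) = 2}"
    using assms(4) by (simp add: card_filter_sum sum.distrib sum_distrib_left)
  show ?thesis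
  proof (cases "card (inc f) = 1")
    case True
    then obtain a where a: "inc f = {a}" by (auto simp: card_Suc_eq)
    have e1: "{v\<in>V. inc f = {v}} = {a}" using a assms(3) by auto
    have e2: "{v\<in>V. v \<in> inc f \<and> card (inc f) = 2} = {}" using True by auto
    show ?thesis unfolding s e1 e2 by simp
  next
    case False
    then have c2: "card (inc f) = 2" using c by blast
    have e1: "{v\<in>V. inc f = {v}} = {}" using c2 by auto
    have e2: "{v\<in>V. v \<in> inc f \<and> card (inc f) = 2} = inc f" using c2 assms(3) by auto
    show ?thesis unfolding s e1 e2 using c2 by simp
  qed
qed

lemma handshake:
  assumes "graph E inc" "C \<subseteq> E" "finite C"
  shows "(\<Sum>v\<in>verts inc C. degree inc C v) = 2 * card C"
proof -
  let ?V = "verts inc C"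
  have fV: "finite ?V" using finite_verts[OF assms(1,2,3)] .
  have "(\<Sum>v\<in>?V. degree inc C v)
     = (\<Sum>v\<in>?V. \<Sum>f\<in>C. 2 * of_bool (inc f = {v}) + of_bool (v \<in> inc f \<and> card (inc f) = 2) :: nat)"
  proof (rule sum.cong[OF refl])
    fix v
    show "degree inc C v = (\<Sum>f\<in>C. 2 * of_bool (inc f = {v}) + of_bool (v \<in> inc f \<and> card (inc f) = 2))"
      unfolding degree_def card_filter_sum[OF assms(3)] sum.distrib sum_distrib_left[symmetric] ..
  qed
  also have "\<dots> = (\<Sum>f\<in>C. \<Sum>v\<in>?V. 2 * of_bool (inc f = {v}) + of_bool (v \<in> inc f \<and> card (inc f) = 2))"
    by (rule sum.swap)
  also have "\<dots> = (\<Sum>f\<in>C. 2)"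
  proof (rule sum.cong[OF refl])
    fix f assume "f \<in> C"
    then show "(\<Sum>v\<in>?V. 2 * of_bool (inc f = {v}) + of_bool (v \<in> inc f \<and> card (inc f) = 2)) = (2::nat)"
    proof -
      have fE: "f \<in> E" using \<open>f \<in> C\<close> assms(2) by blast
      have "inc f \<subseteq> ?V" using \<open>f \<in> C\<close> by (auto simp: verts_def)
      then show ?thesis by (rule per_edge[OF assms(1) fE _ fV])
    qed
  qed
  finally show ?thesis by simp
qed

lemma cycle_exc:
  assumes "graph E inc" "C \<subseteq> E" "finite C" "is_cycle inc C"
  shows "exc inc C = 0"
proof -
  have "(\<Sum>v\<in>verts inc C. degree inc C v) = 2 * card (verts inc C)"
    using assms(4) unfolding is_cycle_def by simp
  then show ?thesis using handshake[OF assms(1-3)] by (simp add: exc_def)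
qed

lemma cycle_leafless:
  assumes "is_cycle inc C"
  shows "leafless inc C"
  unfolding leafless_def
proof (intro allI notI)
  fix v assume v: "is_leaf inc C v"
  then obtain f where f: "f \<in> C" "v \<in> inc f" and u: "\<And>g. g \<in> C \<Longrightarrow> v \<in> inc g \<Longrightarrow> g = f"
    unfolding is_leaf_def by blast
  have all: "\<forall>g\<in>C. v \<in> inc g \<longrightarrow> card (inc g) = 2"
    using v unfolding is_leaf_def by (rule conjunct2)
  have c2: "card (inc f) = 2" using all f by blast
  have e1: "{g\<in>C. inc g = {v}} = {}"
  proof -
    have "\<And>g. g \<in> C \<Longrightarrow> inc g = {v} \<Longrightarrow> False"
    proof -
      fix g assume "g \<in> C" "inc g = {v}"
      moreover have "v \<in> inc g" using \<open>inc g = {v}\<close> by simp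
      ultimately have "card (inc g) = 2" using all by blast
      then show False using \<open>inc g = {v}\<close> by simp
    qed
    then show ?thesis by blast
  qed
  have e2: "{g\<in>C. v \<in> inc g \<and> card (inc g) = 2} = {f}" using u f c2 by blast
  have d: "degree inc C v = 1" unfolding degree_def e1 e2 by simp
  have vv: "v \<in> verts inc C" using f by (auto simp: verts_def)
  have "degree inc C v = 2" using assms vv unfolding is_cycle_def by blast
  then show False using d by simp
qed

lemma cycle_not_nested:
  assumes "graph E inc" "C1 \<subseteq> E" "finite C1" "is_cycle inc C1" "is_cycle inc C2" "C2 \<subset> C1"
  shows False
proof -
  have cn: "conn inc C1" using assms(4) connected_conn unfolding is_cycle_def by blast
  obtain g h where gh: "g \<in> C2" "h \<in> C1 - C2" "inc g \<inter> inc h \<noteq> {}"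
    using conn_step[OF cn, of C2] assms(5,6) unfolding is_cycle_def by blast
  obtain u where u: "u \<in> inc g" "u \<in> inc h" using gh by blast
  have uv2: "u \<in> verts inc C2" and uv1: "u \<in> verts inc C1" using u gh assms(6) by (auto simp: verts_def)
  have d2: "degree inc C2 u = 2" using uv2 assms(5) unfolding is_cycle_def by blast
  have d1: "degree inc C1 u = 2" using uv1 assms(4) unfolding is_cycle_def by blast
  have f2: "finite C2" using assms(3,6) finite_subset by blast
  have m1: "card {f\<in>C2. inc f = {u}} \<le> card {f\<in>C1. inc f = {u}}"
    using assms(3,6) by (intro card_mono) auto
  have m2: "card {f\<in>C2. u \<in> inc f \<and> card (inc f) = 2} \<le> card {f\<in>C1. u \<in> inc f \<and> card (inc f) = 2}"
    using assms(3,6) by (intro card_mono) auto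
  have hc: "card (inc h) = 1 \<or> card (inc h) = 2" using assms(1,2) gh unfolding graph_def by blast
  show False
  proof (cases "card (inc h) = 1")
    case True
    then have "inc h = {u}" using u by (auto simp: card_Suc_eq)
    then have "card {f\<in>C2. inc f = {u}} < card {f\<in>C1. inc f = {u}}"
      using assms(3,6) gh by (intro psubset_card_mono) auto
    then show False using d1 d2 m2 unfolding degree_def by linarith
  next
    case False
    then have "card (inc h) = 2" using hc by blast
    then have "card {f\<in>C2. u \<in> inc f \<and> card (inc f) = 2} < card {f\<in>C1. u \<in> inc f \<and> card (inc f) = 2}"
      using assms(3,6) gh u by (intro psubset_card_mono) auto
    then show False using d1 d2 m1 unfolding degree_def by linarith
  qed
qed



lemma circ_exc:
  assumes "Mk_circuit E inc k C"
  shows "C \<subseteq> E" "C \<noteq> {}" "exc inc C = int k"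
  using assms unfolding Mk_circuit_def Let_def exc_def by auto

lemma exists_circuit:
  assumes "graph E inc" "k \<ge> 1" "Y \<subseteq> E" "Y \<noteq> {}" "exc inc Y \<ge> int k"
  shows "\<exists>C. Mk_circuit E inc k C \<and> C \<subseteq> Y"
proof -
  have fE: "finite E" using assms(1) unfolding graph_def by blast
  let ?P = "\<lambda>Z. Z \<subseteq> Y \<and> Z \<noteq> {} \<and> exc inc Z \<ge> int k"
  obtain Z where Z: "?P Z" "\<forall>W. ?P W \<longrightarrow> card Z \<le> card W"
    using ex_has_least_nat[of ?P Y card] assms(3,4,5) by blast
  have fZ2: "Z \<subseteq> E" using Z(1) assms(3) by blast
  have fZ1: "finite Z" using fE fZ2 by (rule rev_finite_subset)
  note fZ = fZ1 fZ2
  have small: "\<And>D. D \<subseteq> Z \<Longrightarrow> D \<noteq> Z \<Longrightarrow> D \<noteq> {} \<Longrightarrow> exc inc D < int k"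
  proof -
    fix D assume D: "D \<subseteq> Z" "D \<noteq> Z" "D \<noteq> {}"
    then have "card D < card Z" using fZ(1) by (simp add: psubset_card_mono)
    then have "\<not> ?P D" using Z(2) by auto
    moreover have "D \<subseteq> Y" using D(1) Z(1) by blast
    ultimately show "exc inc D < int k" using D(3) by auto
  qed
  have eq: "exc inc Z = int k"
  proof (rule ccontr)
    assume ne: "exc inc Z \<noteq> int k"
    obtain z where z: "z \<in> Z" using Z by blast
    show False
    proof (cases "Z - {z} = {}")
      case True
      then have "Z = {z}" using z by blast
      have zE: "z \<in> E" using fZ(2) z by blast
      have "exc inc {z} \<le> 0" by (rule exc_single[OF assms(1) zE])
      moreover have "exc inc Z \<ge> int k" using Z(1) by blast
      ultimately show False using \<open>Z = {z}\<close> assms(2) by simp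
    next
      case False
      have "exc inc (Z - {z}) \<ge> exc inc Z - 1" using exc_remove[OF assms(1) fZ(1) fZ(2) z] .
      moreover have "exc inc (Z - {z}) < int k" by (rule small) (use False z in auto)
      moreover have "exc inc Z \<ge> int k" using Z(1) by blast
      ultimately show False using ne by linarith
    qed
  qed
  have "Mk_circuit E inc k Z"
    unfolding Mk_circuit_def Let_def
  proof (intro conjI allI impI)
    show "Z \<subseteq> E" by (rule fZ(2))
    show "Z \<noteq> {}" using Z(1) by blast
    show "card Z = card (verts inc Z) + k" using eq unfolding exc_def by linarith
    fix D assume D: "D \<subset> Z"
    show "\<not> (D \<subseteq> E \<and> D \<noteq> {} \<and> card D = card (verts inc D) + k)"
    proof
      assume "D \<subseteq> E \<and> D \<noteq> {} \<and> card D = card (verts inc D) + k"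
      then have "D \<noteq> {}" "exc inc D = int k" unfolding exc_def by simp_all
      moreover have "exc inc D < int k" by (rule small) (use D \<open>D \<noteq> {}\<close> in auto)
      ultimately show False by simp
    qed
  qed
  then show ?thesis using Z by blast
qed

lemma indep_iff:
  assumes "graph E inc" "k \<ge> 1"
  shows "Mk_indep E inc k X \<longleftrightarrow> X \<subseteq> E \<and> (\<forall>Y. Y \<subseteq> X \<longrightarrow> Y \<noteq> {} \<longrightarrow> exc inc Y < int k)"
proof
  assume i: "Mk_indep E inc k X"
  show "X \<subseteq> E \<and> (\<forall>Y. Y \<subseteq> X \<longrightarrow> Y \<noteq> {} \<longrightarrow> exc inc Y < int k)"
  proof (intro conjI allI impI)
    show "X \<subseteq> E" using i unfolding Mk_indep_def by blast
    fix Y assume "Y \<subseteq> X" "Y \<noteq> {}"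
    show "exc inc Y < int k"
    proof (rule ccontr)
      assume "\<not> exc inc Y < int k"
      then obtain C where "Mk_circuit E inc k C" "C \<subseteq> Y"
        using exists_circuit[OF assms, of Y] \<open>Y \<subseteq> X\<close> \<open>Y \<noteq> {}\<close> \<open>X \<subseteq> E\<close> by force
      then show False using i \<open>Y \<subseteq> X\<close> unfolding Mk_indep_def by blast
    qed
  qed
next
  assume r: "X \<subseteq> E \<and> (\<forall>Y. Y \<subseteq> X \<longrightarrow> Y \<noteq> {} \<longrightarrow> exc inc Y < int k)"
  show "Mk_indep E inc k X"
    unfolding Mk_indep_def
  proof (intro conjI allI impI notI)
    show "X \<subseteq> E" using r by blast
    fix C assume C: "Mk_circuit E inc k C" and CX: "C \<subseteq> X"
    have "exc inc C < int k" using r CX circ_exc(2)[OF C] by blast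
    then show False using circ_exc(3)[OF C] by simp
  qed
qed



theorem mainTheorem20:
  fixes E :: "'e set" and inc :: "'e \<Rightarrow> 'v set" and k :: nat and B :: "'e set" and e :: 'e
  assumes "graph E inc"
    and "k \<ge> 1"
    and "Mk_connected E inc k"
    and "Mk_base E inc k B"
    and "e \<in> B"
    and "A = component_of inc B e"
    and "\<exists>C1 C2. C1 \<subseteq> A \<and> C2 \<subseteq> A \<and> C1 \<noteq> C2 \<and> is_cycle inc C1 \<and> is_cycle inc C2"
    and "e \<in> kernel_edges inc A"
  shows "fund_cocircuit E inc k e B = (E - B) \<union> {e}"
proof -
  note G = assms(1) and k1 = assms(2)
  have fE: "finite E" using G unfolding graph_def by blast
  have BI: "Mk_indep E inc k B" and Bmax: "\<And>X. B \<subset> X \<Longrightarrow> \<not> Mk_indep E inc k X"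
    using assms(4) unfolding Mk_base_def by blast+
  have BE: "B \<subseteq> E" using BI unfolding Mk_indep_def by blast
  have Bexc: "\<And>Y. Y \<subseteq> B \<Longrightarrow> Y \<noteq> {} \<Longrightarrow> exc inc Y < int k"
    using BI indep_iff[OF G k1] by blast
  have fin: "\<And>X. X \<subseteq> E \<Longrightarrow> finite X" using fE finite_subset by blast
  have AB: "A \<subseteq> B" using comp_sub[of inc B e] assms(5,6) by blast
  have AE: "A \<subseteq> E" using AB BE by blast
  have eA: "e \<in> A" unfolding assms(6) by (rule comp_self)
  have connA: "conn inc A" using comp_conn[OF assms(5)] assms(6) by simp
  obtain C1 C2 where C: "C1 \<subseteq> A" "C2 \<subseteq> A" "C1 \<noteq> C2" "is_cycle inc C1" "is_cycle inc C2"
    using assms(7) by blast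
  have C1ne: "C1 \<noteq> {}" using C(4) unfolding is_cycle_def by blast
  define K where "K = kernel_edges inc A"
  have KP: "K \<subseteq> A \<and> leafless inc K \<and> conn inc K \<and> exc inc K = exc inc A
    \<and> (\<forall>L. L \<subseteq> A \<longrightarrow> leafless inc L \<longrightarrow> L \<subseteq> K)"
    unfolding K_def using kernel_props[OF G AE fin[OF AE] connA C(1) C1ne cycle_leafless[OF C(4)]] .
  have eK: "e \<in> K" using assms(8) K_def by simp
  have KA: "K \<subseteq> A" and Kll: "leafless inc K" and Kconn: "conn inc K"
    and Kexc: "exc inc K = exc inc A" and Kmax: "\<And>L. L \<subseteq> A \<Longrightarrow> leafless inc L \<Longrightarrow> L \<subseteq> K"
    using KP by blast+
  have KE: "K \<subseteq> E" using KA AE by (rule subset_trans)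
  have fK: "finite K" using fin[OF KE] .
  have noleaf: "\<And>v. \<not> is_leaf inc K v" using Kll unfolding leafless_def by blast
  have exA: "exc inc A \<ge> 1"
  proof (rule ccontr)
    assume "\<not> exc inc A \<ge> 1"
    then have le: "exc inc K \<le> 0" using Kexc by simp
    have C1K: "C1 \<subseteq> K" by (rule Kmax[OF C(1) cycle_leafless[OF C(4)]])
    have C2K: "C2 \<subseteq> K" by (rule Kmax[OF C(2) cycle_leafless[OF C(5)]])
    have C1E: "C1 \<subseteq> E" using C1K KE by (rule subset_trans)
    have fC1: "finite C1" using fin[OF C1E] .
    show False
    proof (cases "C1 = K")
      case True
      then have "C2 \<subset> C1" using C2K C(3) by blast
      then show False by (rule cycle_not_nested[OF G C1E fC1 C(4) C(5)])
    next
      case False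
      then have sub: "C1 \<subset> K" using C1K by blast
      have "exc inc C1 = 0" by (rule cycle_exc[OF G C1E fC1 C(4)])
      then have "exc inc K \<le> exc inc C1" using le by simp
      then obtain v where "is_leaf inc K v" using leaf_lemma[OF G KE fK Kconn sub C1ne] by blast
      then show False using noleaf by blast
    qed
  qed
  have L: "\<And>Z. Z \<subseteq> A - {e} \<Longrightarrow> exc inc Z < exc inc A"
  proof -
    fix Z assume Z: "Z \<subseteq> A - {e}"
    show "exc inc Z < exc inc A"
    proof (cases "Z = {}")
      case True then show ?thesis using exA by simp
    next
      case Zne: False
      show ?thesis
      proof (rule ccontr)
        assume "\<not> exc inc Z < exc inc A"
        then have ge: "exc inc Z \<ge> exc inc A" by simp
        have ZA: "Z \<subseteq> A" using Z by blast
        have ZE: "Z \<subseteq> E" using ZA AE by (rule subset_trans)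
        have sup: "exc inc (Z \<union> K) + exc inc (Z \<inter> K) \<ge> exc inc Z + exc inc K"
          using exc_super[OF G fin[OF ZE] fK ZE KE] .
        have ZKA: "Z \<union> K \<subseteq> A" using ZA KA by (rule Un_least)
        have ZKne: "Z \<union> K \<noteq> {}" using Zne by simp
        have un: "exc inc (Z \<union> K) \<le> exc inc A"
          by (rule growth[OF G AE fin[OF AE] connA ZKA ZKne])
        show False
        proof (cases "Z \<inter> K = {}")
          case True
          then have "exc inc (Z \<inter> K) = 0" by simp
          then show False using sup un ge Kexc exA by linarith
        next
          case False
          have eZ: "e \<notin> Z" using Z by blast
          have sub: "Z \<inter> K \<subset> K" using eK eZ by blast
          have "exc inc K \<le> exc inc (Z \<inter> K)" using sup un ge Kexc by linarith
          then obtain v where "is_leaf inc K v" using leaf_lemma[OF G KE fK Kconn sub False] by blast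
          then show False using noleaf by blast
        qed
      qed
    qed
  qed
  have NT: "\<And>Y. Y \<subseteq> B - {e} \<Longrightarrow> Y \<noteq> {} \<Longrightarrow> exc inc Y < int k - 1"
  proof -
    fix Y assume Y: "Y \<subseteq> B - {e}" "Y \<noteq> {}"
    define YA where "YA = Y \<inter> A"
    define YO where "YO = Y - A"
    have YOB: "YO \<subseteq> B" using Y unfolding YO_def by blast
    have disj: "\<And>W. W \<subseteq> A \<Longrightarrow> verts inc W \<inter> verts inc YO = {}"
    proof -
      fix W assume W: "W \<subseteq> A"
      show "verts inc W \<inter> verts inc YO = {}"
      proof (rule ccontr)
        assume "verts inc W \<inter> verts inc YO \<noteq> {}"
        then obtain f g where fg: "f \<in> W" "g \<in> YO" "inc f \<inter> inc g \<noteq> {}"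
          unfolding verts_def by blast
        have fA: "f \<in> A" using fg(1) W by blast
        have fB: "f \<in> B" using fA AB by blast
        have gB: "g \<in> B" using fg(2) YOB by blast
        have "g \<in> component_of inc B e"
          by (rule comp_closed[OF _ gB fB fg(3)]) (use fA assms(6) in simp)
        then have "g \<in> A" using assms(6) by simp
        then show False using fg(2) unfolding YO_def by blast
      qed
    qed
    have YE: "Y \<subseteq> E" using Y BE by blast
    have YAE: "YA \<subseteq> E" using YE unfolding YA_def by blast
    have YOE: "YO \<subseteq> E" using YE unfolding YO_def by blast
    have YAA: "YA \<subseteq> A" unfolding YA_def by blast
    have Yeq: "Y = YA \<union> YO" unfolding YA_def YO_def by blast
    have e1: "exc inc Y = exc inc YA + exc inc YO"
      unfolding Yeq by (rule exc_disj[OF G fin[OF YAE] fin[OF YOE] YAE YOE disj[OF YAA]])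
    have e2: "exc inc (A \<union> YO) = exc inc A + exc inc YO"
      by (rule exc_disj[OF G fin[OF AE] fin[OF YOE] AE YOE disj[OF subset_refl]])
    have AYB: "A \<union> YO \<subseteq> B" using AB YOB by (rule Un_least)
    have AYne: "A \<union> YO \<noteq> {}" using eA by blast
    have "exc inc (A \<union> YO) < int k" by (rule Bexc[OF AYB AYne])
    moreover have "exc inc YA < exc inc A" by (rule L) (use Y in \<open>auto simp: YA_def\<close>)
    ultimately show "exc inc Y < int k - 1" using e1 e2 by linarith
  qed
  have tight: "\<And>g. g \<in> E - B \<Longrightarrow> \<exists>Y. Y \<subseteq> B \<and> e \<in> Y \<and> exc inc Y = int k - 1 \<and> inc g \<subseteq> verts inc Y"
  proof -
    fix g assume g: "g \<in> E - B"
    have "\<not> Mk_indep E inc k (insert g B)" using Bmax[of "insert g B"] g by blast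
    moreover have "insert g B \<subseteq> E" using g BE by blast
    ultimately obtain C where Cc: "Mk_circuit E inc k C" "C \<subseteq> insert g B"
      unfolding Mk_indep_def by blast
    have gC: "g \<in> C"
    proof (rule ccontr)
      assume "g \<notin> C" then have "C \<subseteq> B" using Cc by blast
      then show False using BI Cc unfolding Mk_indep_def by blast
    qed
    let ?Y = "C - {g}"
    have YB: "?Y \<subseteq> B" using Cc by blast
    have Yne: "?Y \<noteq> {}"
    proof
      assume "?Y = {}" then have "C = {g}" using gC by blast
      then show False using circ_exc[OF Cc(1)] exc_single[OF G, of g] g k1 by simp
    qed
    have YE: "?Y \<subseteq> E" using YB BE by blast
    have ins: "insert g ?Y = C" using gC by blast
    have "exc inc C = exc inc ?Y + 1 - int (card (inc g - verts inc ?Y))"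
      using exc_insert[OF G fin[OF YE] YE, of g] g ins by simp
    moreover have "exc inc ?Y < int k" using Bexc YB Yne by blast
    moreover have "exc inc C = int k" using circ_exc(3)[OF Cc(1)] .
    ultimately have ex: "exc inc ?Y = int k - 1" and c0: "card (inc g - verts inc ?Y) = 0" by linarith+
    have "finite (inc g)" using g_inc[OF G] g by blast
    then have "inc g \<subseteq> verts inc ?Y" using c0 by simp
    moreover have "e \<in> ?Y" using NT[of ?Y] YB Yne ex by force
    ultimately show "\<exists>Y. Y \<subseteq> B \<and> e \<in> Y \<and> exc inc Y = int k - 1 \<and> inc g \<subseteq> verts inc Y"
      using YB ex by blast
  qed
  have newbase: "\<And>f. f \<in> E - B \<Longrightarrow> Mk_base E inc k (insert f (B - {e}))"
  proof -
    fix f assume f: "f \<in> E - B"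
    let ?B' = "insert f (B - {e})"
    have B'E: "?B' \<subseteq> E" using f BE by blast
    have indep: "Mk_indep E inc k ?B'"
      unfolding indep_iff[OF G k1]
    proof (intro conjI allI impI)
      show "?B' \<subseteq> E" by (rule B'E)
      fix Y' assume Y': "Y' \<subseteq> ?B'" "Y' \<noteq> {}"
      show "exc inc Y' < int k"
      proof (cases "f \<in> Y'")
        case False
        then show ?thesis using Bexc[of Y'] Y' by blast
      next
        case True
        let ?Y = "Y' - {f}"
        have YE: "?Y \<subseteq> E" using Y' BE by blast
        show ?thesis
        proof (cases "?Y = {}")
          case True
          then have "Y' = {f}" using \<open>f \<in> Y'\<close> by blast
          then show ?thesis using exc_single[OF G, of f] f k1 by simp
        next
          case False
          have "exc inc ?Y < int k - 1" using NT[of ?Y] Y' False by blast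
          moreover have "exc inc (insert f ?Y) = exc inc ?Y + 1 - int (card (inc f - verts inc ?Y))"
            using exc_insert[OF G fin[OF YE] YE, of f] f by simp
          moreover have "insert f ?Y = Y'" using True by blast
          ultimately have "exc inc Y' = exc inc ?Y + 1 - int (card (inc f - verts inc ?Y))"
            and "exc inc ?Y < int k - 1" by simp_all
          then show ?thesis by linarith
        qed
      qed
    qed
    have max: "\<forall>X. ?B' \<subset> X \<longrightarrow> \<not> Mk_indep E inc k X"
    proof (intro allI impI notI)
      fix X assume X: "?B' \<subset> X" and iX: "Mk_indep E inc k X"
      have XE: "X \<subseteq> E" using iX unfolding Mk_indep_def by blast
      have Xexc: "\<And>Y. Y \<subseteq> X \<Longrightarrow> Y \<noteq> {} \<Longrightarrow> exc inc Y < int k"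
        using iX indep_iff[OF G k1] by blast
      obtain g where g: "g \<in> X" "g \<notin> ?B'" using X by blast
      show False
      proof (cases "g = e")
        case True
        have "insert f B \<subseteq> X" using X g True by blast
        then have "Mk_indep E inc k (insert f B)" using iX unfolding Mk_indep_def by blast
        then show False using Bmax[of "insert f B"] f by blast
      next
        case False
        have gEB: "g \<in> E - B" using g False XE by blast
        have gf: "g \<noteq> f" using g by blast
        obtain Yg where Yg: "Yg \<subseteq> B" "e \<in> Yg" "exc inc Yg = int k - 1" "inc g \<subseteq> verts inc Yg"
          using tight[OF gEB] by blast
        obtain Yf where Yf: "Yf \<subseteq> B" "e \<in> Yf" "exc inc Yf = int k - 1" "inc f \<subseteq> verts inc Yf"
          using tight[OF f] by blast
        let ?U = "Yg \<union> Yf"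
        have UE: "?U \<subseteq> E" "Yg \<subseteq> E" "Yf \<subseteq> E" using Yg Yf BE by auto
        have "exc inc (Yg \<inter> Yf) < int k" using Bexc[of "Yg \<inter> Yf"] Yg Yf by blast
        then have exU: "exc inc ?U \<ge> int k - 1"
          using exc_super[OF G fin[OF UE(2)] fin[OF UE(3)] UE(2,3)] Yg Yf by linarith
        let ?W = "insert g (insert f (?U - {e}))"
        have WX: "?W \<subseteq> X" using X g Yg Yf by blast
        have fU: "finite ?U" using fin UE by blast
        have cW: "card ?W = card ?U + 1"
        proof -
          have fn: "f \<notin> ?U" using f Yg(1) Yf(1) by blast
          have gn: "g \<notin> ?U" using gEB Yg(1) Yf(1) by blast
          have eU: "e \<in> ?U" using Yg(2) by blast
          have c1: "card (?U - {e}) = card ?U - 1" using eU by (rule card_Diff_singleton)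
          have c0: "card ?U \<ge> 1" using fU eU by (metis One_nat_def Suc_leI card_gt_0_iff empty_iff)
          have fD: "finite (?U - {e})" using fU by blast
          have "card ?W = Suc (Suc (card (?U - {e})))" using fD fn gn gf by simp
          then show ?thesis using c1 c0 by linarith
        qed
        have vW: "verts inc ?W \<subseteq> verts inc ?U"
          using Yg Yf by (auto simp: verts_def)
        have "card (verts inc ?W) \<le> card (verts inc ?U)"
          using vW finite_verts[OF G UE(1) fU] by (rule card_mono[rotated])
        then have "exc inc ?W \<ge> int k" using cW exU unfolding exc_def by linarith
        moreover have "exc inc ?W < int k" by (rule Xexc[OF WX]) blast
        ultimately show False by linarith
      qed
    qed
    show "Mk_base E inc k ?B'" unfolding Mk_base_def using indep max by blast
  qed
  let ?K0 = "(E - B) \<union> {e}"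
  have meets: "\<And>B''. Mk_base E inc k B'' \<Longrightarrow> ?K0 \<inter> B'' \<noteq> {}"
  proof
    fix B'' assume b: "Mk_base E inc k B''" and d: "?K0 \<inter> B'' = {}"
    have "B'' \<subseteq> E" using b unfolding Mk_base_def Mk_indep_def by blast
    then have "B'' \<subset> B" using d assms(5) by blast
    then show False using b BI unfolding Mk_base_def by blast
  qed
  have cocirc: "Mk_cocircuit E inc k ?K0"
    unfolding Mk_cocircuit_def Let_def
  proof (intro conjI allI impI)
    show "?K0 \<subseteq> E" using assms(5) BE by blast
    fix B'' assume "Mk_base E inc k B''"
    then show "?K0 \<inter> B'' \<noteq> {}" using meets by blast
  next
    fix D assume D: "D \<subset> ?K0"
    show "\<not> (D \<subseteq> E \<and> (\<forall>B. Mk_base E inc k B \<longrightarrow> D \<inter> B \<noteq> {}))"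
    proof (cases "e \<in> D")
      case False
      then have "D \<inter> B = {}" using D by blast
      then show ?thesis using assms(4) by blast
    next
      case True
      obtain f where f: "f \<in> ?K0" "f \<notin> D" using D by blast
      then have fEB: "f \<in> E - B" using True by blast
      have "D \<inter> insert f (B - {e}) = {}" using D f by blast
      then show ?thesis using newbase[OF fEB] by blast
    qed
  qed
  have uniq: "\<And>K'. Mk_cocircuit E inc k K' \<and> K' \<inter> B = {e} \<Longrightarrow> K' = ?K0"
  proof -
    fix K' assume K': "Mk_cocircuit E inc k K' \<and> K' \<inter> B = {e}"
    have K'E: "K' \<subseteq> E" and K'm: "\<And>B''. Mk_base E inc k B'' \<Longrightarrow> K' \<inter> B'' \<noteq> {}"
      using K' unfolding Mk_cocircuit_def Let_def by blast+
    show "K' = ?K0"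
    proof
      show "K' \<subseteq> ?K0" using K'E K' by blast
      show "?K0 \<subseteq> K'"
      proof
        fix f assume "f \<in> ?K0"
        then consider "f = e" | "f \<in> E - B" by blast
        then show "f \<in> K'"
        proof cases
          case 1 then show ?thesis using K' by blast
        next
          case 2
          have "K' \<inter> insert f (B - {e}) \<noteq> {}" using K'm newbase[OF 2] by blast
          then show ?thesis using K' by blast
        qed
      qed
    qed
  qed
  have "?K0 \<inter> B = {e}" using assms(5) by blast
  then show ?thesis unfolding fund_cocircuit_def
    using cocirc uniq by (intro the_equality) blast+
qed

end
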